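(* Let $G$ be a $6$-regular graph, $\mathcal S$ a canonical path partition of $G$, and $P$ a path component with end-vertices $o_1,o_2$. Let $x_1,x_2\in V_2$ be path neighbors on $P$, with $x_1$ immediately preceding $x_2$ when $P$ is traversed from $o_1$ to $o_2$. If $x_1$ goes to $o_1$, then every vertex that $x_2$ goes to is either $o_1$, $o_2$, or a vertex of a cycle component (i.e., $x_2$ goes to no end-vertex of a path component other than $P$).
   Context: All graphs are finite, simple and undirected. A path partition of $G=(V,E)$ is a set of vertex-disjoint paths (single vertices allowed) covering $V$; its members are components. A component with $t\ge3$ vertices is a cycle component if the subgraph induced on its vertex set has a spanning cycle; a one-vertex component is an isolated vertex; every other component is a path component. A path partition is canonical if (1) it has the minimum number of components among all path partitions of $G$; (2) among those, it has the maximum number of cycle components; (3) it has no isolated vertices. Given a canonical path partition $\mathcal S$ of $G$: two vertices are path neighbors if they are consecutive on a path component. An edge of $G$ is a free edge unless it joins two path neighbors or has both endpoints in the same cycle component. $V_1$ is the set of end-vertices of path components together with all vertices of cycle components. $V_2$ is the set of vertices not in $V_1$ that are joined by a free edge to a vertex of $V_1$. A balanced edge is a free edge with one endpoint in $V_1$ and the other in $V_2$; for $x\in V_2$, $y\in V_1$ we say $x$ goes to $y$ if $xy$ is a balanced edge. *)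

theory Defs
  imports Main
begin

definition simple_graph :: "'a set \<Rightarrow> ('a \<Rightarrow> 'a \<Rightarrow> bool) \<Rightarrow> bool" where
  "simple_graph V E \<longleftrightarrow> finite V \<and> (\<forall>u v. E u v \<longrightarrow> E v u) \<and> (\<forall>u. \<not> E u u)
     \<and> (\<forall>u v. E u v \<longrightarrow> u \<in> V \<and> v \<in> V)"

definition regular :: "'a set \<Rightarrow> ('a \<Rightarrow> 'a \<Rightarrow> bool) \<Rightarrow> nat \<Rightarrow> bool" where
  "regular V E k \<longleftrightarrow> (\<forall>v\<in>V. card {u \<in> V. E v u} = k)"

definition is_path :: "('a \<Rightarrow> 'a \<Rightarrow> bool) \<Rightarrow> 'a list \<Rightarrow> bool" where
  "is_path E xs \<longleftrightarrow> xs \<noteq> [] \<and> distinct xs \<and> (\<forall>i. Suc i < length xs \<longrightarrow> E (xs ! i) (xs ! Suc i))"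

definition path_partition :: "'a set \<Rightarrow> ('a \<Rightarrow> 'a \<Rightarrow> bool) \<Rightarrow> 'a list set \<Rightarrow> bool" where
  "path_partition V E S \<longleftrightarrow> finite S \<and> (\<forall>P\<in>S. is_path E P \<and> set P \<subseteq> V)
     \<and> (\<forall>P\<in>S. \<forall>Q\<in>S. P \<noteq> Q \<longrightarrow> set P \<inter> set Q = {})
     \<and> (\<Union>P\<in>S. set P) = V"

definition has_spanning_cycle :: "('a \<Rightarrow> 'a \<Rightarrow> bool) \<Rightarrow> 'a set \<Rightarrow> bool" where
  "has_spanning_cycle E X \<longleftrightarrow> (\<exists>ys. distinct ys \<and> set ys = X \<and> 3 \<le> length ys
     \<and> (\<forall>i. Suc i < length ys \<longrightarrow> E (ys ! i) (ys ! Suc i)) \<and> E (last ys) (hd ys))"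

definition cycle_comp :: "('a \<Rightarrow> 'a \<Rightarrow> bool) \<Rightarrow> 'a list \<Rightarrow> bool" where
  "cycle_comp E P \<longleftrightarrow> 3 \<le> length P \<and> has_spanning_cycle E (set P)"

definition isolated_comp :: "'a list \<Rightarrow> bool" where
  "isolated_comp P \<longleftrightarrow> length P = 1"

definition path_comp :: "('a \<Rightarrow> 'a \<Rightarrow> bool) \<Rightarrow> 'a list \<Rightarrow> bool" where
  "path_comp E P \<longleftrightarrow> \<not> isolated_comp P \<and> \<not> cycle_comp E P"

definition num_cycle_comps :: "('a \<Rightarrow> 'a \<Rightarrow> bool) \<Rightarrow> 'a list set \<Rightarrow> nat" where
  "num_cycle_comps E S = card {P \<in> S. cycle_comp E P}"

definition canonical :: "'a set \<Rightarrow> ('a \<Rightarrow> 'a \<Rightarrow> bool) \<Rightarrow> 'a list set \<Rightarrow> bool" where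
  "canonical V E S \<longleftrightarrow> path_partition V E S
     \<and> (\<forall>S'. path_partition V E S' \<longrightarrow> card S \<le> card S')
     \<and> (\<forall>S'. path_partition V E S' \<and> card S' = card S \<longrightarrow> num_cycle_comps E S' \<le> num_cycle_comps E S)
     \<and> (\<forall>P\<in>S. \<not> isolated_comp P)"

definition path_neighbors :: "('a \<Rightarrow> 'a \<Rightarrow> bool) \<Rightarrow> 'a list set \<Rightarrow> 'a \<Rightarrow> 'a \<Rightarrow> bool" where
  "path_neighbors E S u v \<longleftrightarrow> (\<exists>P\<in>S. path_comp E P \<and>
     (\<exists>i. Suc i < length P \<and> {P ! i, P ! Suc i} = {u, v}))"

definition free_edge :: "('a \<Rightarrow> 'a \<Rightarrow> bool) \<Rightarrow> 'a list set \<Rightarrow> 'a \<Rightarrow> 'a \<Rightarrow> bool" where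
  "free_edge E S u v \<longleftrightarrow> E u v \<and> \<not> path_neighbors E S u v
     \<and> \<not> (\<exists>C\<in>S. cycle_comp E C \<and> u \<in> set C \<and> v \<in> set C)"

definition V1 :: "('a \<Rightarrow> 'a \<Rightarrow> bool) \<Rightarrow> 'a list set \<Rightarrow> 'a set" where
  "V1 E S = {v. \<exists>P\<in>S. (path_comp E P \<and> (v = hd P \<or> v = last P)) \<or> (cycle_comp E P \<and> v \<in> set P)}"

definition V2 :: "'a set \<Rightarrow> ('a \<Rightarrow> 'a \<Rightarrow> bool) \<Rightarrow> 'a list set \<Rightarrow> 'a set" where
  "V2 V E S = {x \<in> V. x \<notin> V1 E S \<and> (\<exists>y \<in> V1 E S. free_edge E S x y)}"

definition balanced_edge :: "'a set \<Rightarrow> ('a \<Rightarrow> 'a \<Rightarrow> bool) \<Rightarrow> 'a list set \<Rightarrow> 'a \<Rightarrow> 'a \<Rightarrow> bool" where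
  "balanced_edge V E S u v \<longleftrightarrow> free_edge E S u v \<and>
     ((u \<in> V1 E S \<and> v \<in> V2 V E S) \<or> (v \<in> V1 E S \<and> u \<in> V2 V E S))"

definition goes_to :: "'a set \<Rightarrow> ('a \<Rightarrow> 'a \<Rightarrow> bool) \<Rightarrow> 'a list set \<Rightarrow> 'a \<Rightarrow> 'a \<Rightarrow> bool" where
  "goes_to V E S x y \<longleftrightarrow> x \<in> V2 V E S \<and> y \<in> V1 E S \<and> balanced_edge V E S x y"

end

theory Submission
  imports Defs
begin

lemma is_path_succ: "is_path E xs \<longleftrightarrow> xs \<noteq> [] \<and> distinct xs \<and> successively E xs"
  unfolding is_path_def successively_conv_nth by blast

lemma succ_take: "successively E xs \<Longrightarrow> successively E (take n xs)"
  by (metis append_take_drop_id successively_append_iff)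

lemma succ_drop: "successively E xs \<Longrightarrow> successively E (drop n xs)"
  by (metis append_take_drop_id successively_append_iff)

theorem mainTheorem7:
  fixes V :: "'a set" and E :: "'a \<Rightarrow> 'a \<Rightarrow> bool" and S :: "'a list set"
    and P :: "'a list" and x1 x2 :: 'a and i :: nat
  assumes "simple_graph V E"
    and "regular V E 6"
    and "canonical V E S"
    and "P \<in> S" and "path_comp E P"
    and "Suc i < length P" and "P ! i = x1" and "P ! Suc i = x2"
    and "x1 \<in> V2 V E S" and "x2 \<in> V2 V E S"
    and "goes_to V E S x1 (hd P)"
  shows "\<forall>y. goes_to V E S x2 y \<longrightarrow>
           y = hd P \<or> y = last P \<or> (\<exists>C\<in>S. cycle_comp E C \<and> y \<in> set C)"
proof (intro allI impI)
  fix y assume gy: "goes_to V E S x2 y"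
  show "y = hd P \<or> y = last P \<or> (\<exists>C\<in>S. cycle_comp E C \<and> y \<in> set C)"
  proof (rule ccontr)
    assume nc: "\<not> ?thesis"
    have sym: "\<And>u v. E u v \<Longrightarrow> E v u" using assms(1) unfolding simple_graph_def by blast
    have pp: "path_partition V E S" and mincard: "\<forall>S'. path_partition V E S' \<longrightarrow> card S \<le> card S'"
      and maxcyc: "\<forall>S'. path_partition V E S' \<and> card S' = card S \<longrightarrow> num_cycle_comps E S' \<le> num_cycle_comps E S"
      using assms(3) unfolding canonical_def by blast+
    have finS: "finite S" and paths: "\<forall>P\<in>S. is_path E P \<and> set P \<subseteq> V"
      and disj: "\<forall>P\<in>S. \<forall>Q\<in>S. P \<noteq> Q \<longrightarrow> set P \<inter> set Q = {}"
      and cov: "(\<Union>P\<in>S. set P) = V"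
      using pp unfolding path_partition_def by blast+
    have yV1: "y \<in> V1 E S" using gy unfolding goes_to_def by blast
    have Exy: "E x2 y" using gy unfolding goes_to_def free_edge_def balanced_edge_def by blast
    obtain Q where QS: "Q \<in> S" and Qpc: "path_comp E Q" and yQ: "y = hd Q \<or> y = last Q"
      using yV1 nc unfolding V1_def by blast
    have Qpath: "is_path E Q" using paths QS by blast
    have yinQ: "y \<in> set Q" using yQ Qpath unfolding is_path_def by auto
    have Ppath: "is_path E P" using paths assms(4) by blast
    have yP: "y \<notin> set P"
    proof
      assume "y \<in> set P"
      then have "Q = P" using disj QS assms(4) yinQ by blast
      then show False using yQ nc by blast
    qed
    have QP: "Q \<noteq> P" using yP yinQ by blast
    have disjPQ: "set P \<inter> set Q = {}" using disj QS assms(4) QP by blast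
    have x1notV1: "x1 \<notin> V1 E S" using assms(9) unfolding V2_def by blast
    have hdV1: "hd P \<in> V1 E S" using assms(4,5) unfolding V1_def by blast
    have i0: "i \<noteq> 0"
    proof
      assume "i = 0"
      then have "x1 = hd P" using assms(6,7) by (cases P) auto
      then show False using x1notV1 hdV1 by simp
    qed
    have fe: "free_edge E S x1 (hd P)" using assms(11) unfolding goes_to_def balanced_edge_def by blast
    have i1: "i \<noteq> 1"
    proof
      assume "i = 1"
      have "hd P = P ! 0" using assms(6) by (cases P) auto
      then have "{P ! 0, P ! Suc 0} = {x1, hd P}" using assms(6,7) \<open>i = 1\<close> by auto
      then have "path_neighbors E S x1 (hd P)" unfolding path_neighbors_def
        using assms(4,5,6) \<open>i = 1\<close> by (metis One_nat_def Suc_lessD)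
      then show False using fe unfolding free_edge_def by blast
    qed
    have E1: "E x1 (hd P)" using fe unfolding free_edge_def by blast
    define A where "A = take (Suc i) P"
    define Q0 where "Q0 = (if y = last Q then Q else rev Q)"
    define B where "B = Q0 @ drop (Suc i) P"
    have Pne: "P \<noteq> []" and Pd: "distinct P" and Ps: "successively E P" using Ppath is_path_succ by blast+
    have Qne: "Q \<noteq> []" and Qd: "distinct Q" and Qs: "successively E Q" using Qpath is_path_succ by blast+
    have lenA: "length A = Suc i" using A_def assms(6) by simp
    have Ane: "A \<noteq> []" using lenA by auto
    have lastA: "last A = x1" using assms(6,7) unfolding A_def by (subst last_conv_nth) (auto simp: min_def)
    have hdA: "hd A = hd P" using A_def by (simp add: hd_take)
    have setA: "set A \<subseteq> set P" using A_def by (simp add: set_take_subset)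
    have Ad: "distinct A" using A_def Pd by simp
    have As: "successively E A" using A_def Ps succ_take by blast
    have Apath: "is_path E A" using Ane Ad As is_path_succ by blast
    have l3: "3 \<le> length A" using lenA i0 i1 by simp
    have As': "\<forall>i. Suc i < length A \<longrightarrow> E (A ! i) (A ! Suc i)" using As successively_conv_nth by blast
    have Acyc: "cycle_comp E A"
      unfolding cycle_comp_def has_spanning_cycle_def
      using l3 Ad As' E1 lastA hdA by (intro conjI exI[of _ A]) auto
    have setQ0: "set Q0 = set Q" unfolding Q0_def by simp
    have Q0d: "distinct Q0" unfolding Q0_def using Qd by simp
    have Q0ne: "Q0 \<noteq> []" unfolding Q0_def using Qne by simp
    have lastQ0: "last Q0 = y"
    proof (cases "y = last Q")
      case True then show ?thesis unfolding Q0_def by simp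
    next
      case False then have "y = hd Q" using yQ by blast
      then show ?thesis unfolding Q0_def using False Qne by (simp add: last_rev)
    qed
    have Q0s: "successively E Q0"
    proof (cases "y = last Q")
      case True then show ?thesis using Qs Q0_def by simp
    next
      case False
      have "successively (\<lambda>x y. E y x) Q" using Qs by (rule successively_mono) (rule sym)
      then show ?thesis using False unfolding Q0_def by simp
    qed
    define D where "D = drop (Suc i) P"
    have Dne: "D \<noteq> []" using D_def assms(6) by simp
    have hdD: "hd D = x2" using D_def assms(6,8) by (simp add: hd_drop_conv_nth)
    have Ds: "successively E D" using D_def Ps succ_drop by blast
    have setD: "set D \<subseteq> set P" using D_def by (simp add: set_drop_subset)
    have Dd: "distinct D" using D_def Pd by simp
    have AD: "set A \<inter> set D = {}" using A_def D_def Pd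
      by (metis append_take_drop_id distinct_append)
    have AuD: "set A \<union> set D = set P" using A_def D_def
      by (metis append_take_drop_id set_append)
    have x2D: "x2 \<in> set D" using hdD Dne by auto
    have Bdef: "B = Q0 @ D" using B_def D_def by simp
    have Bpath: "is_path E B" unfolding is_path_succ Bdef
      using Q0d Dd setQ0 setD disjPQ Q0s Ds lastQ0 hdD Exy sym Q0ne Dne
      by (auto simp: successively_append_iff)
    have setB: "set B = set Q \<union> set D" using Bdef setQ0 by simp
    define S' where "S' = (S - {P, Q}) \<union> {A, B}"
    have AnS: "A \<notin> S - {P, Q}"
    proof
      assume "A \<in> S - {P, Q}"
      then have "set A \<inter> set P = {}" using disj assms(4) by blast
      moreover have "hd A \<in> set A" using Ane by simp
      ultimately show False using setA by blast
    qed
    have BnS: "B \<notin> S - {P, Q}"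
    proof
      assume "B \<in> S - {P, Q}"
      then have "set B \<inter> set P = {}" using disj assms(4) by blast
      then show False using setB setD x2D by blast
    qed
    have AB: "A \<noteq> B" using AD setB disjPQ x2D setA by blast
    have finS': "finite S'" using S'_def finS by simp
    have cardS': "card S' = card S"
    proof -
      have d: "(S - {P, Q}) \<inter> {A, B} = {}" using AnS BnS by blast
      have "card S' = card (S - {P, Q}) + card {A, B}" unfolding S'_def
        using d finS by (intro card_Un_disjoint) auto
      moreover have "card {A, B} = 2" using AB by simp
      moreover have "card {P, Q} = 2" using QP by simp
      moreover have "{P, Q} \<subseteq> S" using assms(4) QS by blast
      moreover have "card (S - {P,Q}) = card S - card {P, Q}"
        using finS \<open>{P, Q} \<subseteq> S\<close> by (intro card_Diff_subset) (auto intro: finite_subset)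
      moreover have "card {P, Q} \<le> card S" using finS \<open>{P, Q} \<subseteq> S\<close> by (intro card_mono)
      ultimately show ?thesis by simp
    qed
    have cQ: "\<not> cycle_comp E Q" and cP: "\<not> cycle_comp E P" using Qpc assms(5) unfolding path_comp_def by blast+
    have AneP: "A \<noteq> P" using lenA assms(6) by auto
    have AneQ: "A \<noteq> Q" using setA disjPQ Ane by (metis disjoint_iff hd_in_set subsetD)
    have AnotS: "A \<notin> S" using AnS AneP AneQ by blast
    have pp': "path_partition V E S'"
      unfolding path_partition_def
    proof (intro conjI)
      show "finite S'" by (rule finS')
      show "\<forall>P\<in>S'. is_path E P \<and> set P \<subseteq> V"
      proof
        fix Z assume "Z \<in> S'"
        then consider "Z \<in> S" | "Z = A" | "Z = B" unfolding S'_def by blast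
        then show "is_path E Z \<and> set Z \<subseteq> V"
        proof cases
          case 1 then show ?thesis using paths by blast
        next
          case 2 then show ?thesis using Apath setA paths assms(4) by blast
        next
          case 3
          have "set P \<subseteq> V" "set Q \<subseteq> V" using paths assms(4) QS by blast+
          then show ?thesis using 3 Bpath setB setD by blast
        qed
      qed
      show "\<forall>P'\<in>S'. \<forall>Q'\<in>S'. P' \<noteq> Q' \<longrightarrow> set P' \<inter> set Q' = {}"
      proof (intro ballI impI)
        fix X Y assume X: "X \<in> S'" and Y: "Y \<in> S'" and XY: "X \<noteq> Y"
        have o: "\<And>Z. Z \<in> S - {P,Q} \<Longrightarrow> set Z \<inter> set P = {} \<and> set Z \<inter> set Q = {}"
          using disj assms(4) QS by blast
        have oA: "\<And>Z. Z \<in> S - {P,Q} \<Longrightarrow> set Z \<inter> set A = {}" using o setA by blast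
        have oB: "\<And>Z. Z \<in> S - {P,Q} \<Longrightarrow> set Z \<inter> set B = {}" using o setB setD by blast
        have AB': "set A \<inter> set B = {}" using AD setB setA disjPQ by blast
        consider "X \<in> S - {P,Q}" "Y \<in> S - {P,Q}" | "X \<in> S - {P,Q}" "Y = A" | "X \<in> S - {P,Q}" "Y = B"
          | "X = A" "Y \<in> S - {P,Q}" | "X = B" "Y \<in> S - {P,Q}" | "X = A" "Y = B" | "X = B" "Y = A"
          using X Y XY unfolding S'_def by blast
        then show "set X \<inter> set Y = {}"
        proof cases
          case 1 then show ?thesis using disj XY by blast
        qed (use oA oB AB' in blast)+
      qed
      show "(\<Union>P\<in>S'. set P) = V"
      proof -
        have "(\<Union>P\<in>S'. set P) = (\<Union>Z\<in>S - {P,Q}. set Z) \<union> set A \<union> set B" unfolding S'_def by auto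
        also have "\<dots> = (\<Union>Z\<in>S - {P,Q}. set Z) \<union> set P \<union> set Q" using AuD setB by blast
        also have "\<dots> = (\<Union>Z\<in>S. set Z)" using assms(4) QS by blast
        finally show ?thesis using cov by simp
      qed
    qed
    have le: "num_cycle_comps E S' \<le> num_cycle_comps E S" using maxcyc pp' cardS' by blast
    have sub: "insert A {C \<in> S. cycle_comp E C} \<subseteq> {C \<in> S'. cycle_comp E C}"
      using Acyc cQ cP unfolding S'_def by auto
    have "card (insert A {C \<in> S. cycle_comp E C}) = Suc (card {C \<in> S. cycle_comp E C})"
      using AnotS finS by simp
    moreover have "card (insert A {C \<in> S. cycle_comp E C}) \<le> card {C \<in> S'. cycle_comp E C}"
      using sub finS' by (simp add: card_mono)
    ultimately show False using le unfolding num_cycle_comps_def by simp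
  qed
qed

end
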